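(* Let $A$ be a minimally AP-irreducible sign pattern matrix of order $n$ with all diagonal entries equal to $0$. If $A[\alpha,\beta]$ contains no $+$ for any two distinct irreducible components $\alpha$ and $\beta$ of $A_+$, then $A$ has at most $2n-2$ nonzero entries. Consequently, at least two rows of $A$ and at least two columns of $A$ contain precisely one nonzero entry.
   Context: A sign pattern matrix has entries in $\{+,-,0\}$. The digraph $D(M)$ of an $n\times n$ matrix $M$ has vertex set $\{1,\dots,n\}$ and an arc $i\to j$ iff $m_{ij}\neq0$; $M$ is irreducible if $n=1$ or $D(M)$ is strongly connected. For a sign pattern $A$: $A_+$ is obtained by replacing every entry that is not $+$ by $0$; $A_-$ by replacing every entry that is not $-$ by $0$; $B_A=A_+-(A_-)^T$, i.e. $(B_A)_{ij}=+$ if $a_{ij}=+$ or $a_{ji}=-$, and $0$ otherwise. An irreducible sign pattern $A$ is AP-irreducible if every row and every column contains a $+$ and $B_A$ is irreducible; $A$ is minimally AP-irreducible if it is AP-irreducible and does not remain AP-irreducible after replacing any single nonzero entry by $0$. $A[\alpha,\beta]$ is the submatrix with rows in $\alpha$ and columns in $\beta$, $A[\alpha]=A[\alpha,\alpha]$. The irreducible components of a sign pattern $M$ of order $n$ are the pairwise disjoint nonempty sets partitioning $\{1,\dots,n\}$ that are maximal with respect to $M[\alpha]$ being irreducible (the vertex sets of the strongly connected components of $D(M)$). *)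

theory Defs
  imports Main
begin

datatype sign = Pos | Neg | Zero

text \<open>A sign pattern matrix of order n is modelled as a function
  nat \<Rightarrow> nat \<Rightarrow> sign whose entries with indices i, j < n
  (0-based) are the matrix entries; other values are irrelevant.\<close>

type_synonym sign_matrix = "nat \<Rightarrow> nat \<Rightarrow> sign"

definition arcs_on :: "sign_matrix \<Rightarrow> nat set \<Rightarrow> (nat \<times> nat) set" where
  "arcs_on M S = {(i, j). i \<in> S \<and> j \<in> S \<and> M i j \<noteq> Zero}"

definition irreducible_on :: "sign_matrix \<Rightarrow> nat set \<Rightarrow> bool" where
  "irreducible_on M S \<longleftrightarrow>
     card S = 1 \<or> (\<forall>i\<in>S. \<forall>j\<in>S. (i, j) \<in> (arcs_on M S)\<^sup>*)"

definition irreducible :: "sign_matrix \<Rightarrow> nat \<Rightarrow> bool" where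
  "irreducible M n \<longleftrightarrow> irreducible_on M {0..<n}"

definition pos_part :: "sign_matrix \<Rightarrow> sign_matrix" where
  "pos_part A = (\<lambda>i j. if A i j = Pos then Pos else Zero)"

definition neg_part :: "sign_matrix \<Rightarrow> sign_matrix" where
  "neg_part A = (\<lambda>i j. if A i j = Neg then Neg else Zero)"

text \<open>B_A = A_+ - (A_-)^T.\<close>
definition B_mat :: "sign_matrix \<Rightarrow> sign_matrix" where
  "B_mat A = (\<lambda>i j. if pos_part A i j = Pos \<or> neg_part A j i = Neg then Pos else Zero)"

definition AP_irreducible :: "sign_matrix \<Rightarrow> nat \<Rightarrow> bool" where
  "AP_irreducible A n \<longleftrightarrow>
     irreducible A n \<and>
     (\<forall>i<n. \<exists>j<n. A i j = Pos) \<and>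
     (\<forall>j<n. \<exists>i<n. A i j = Pos) \<and>
     irreducible (B_mat A) n"

definition zero_entry :: "sign_matrix \<Rightarrow> nat \<Rightarrow> nat \<Rightarrow> sign_matrix" where
  "zero_entry A i j = A(i := (A i)(j := Zero))"

definition minimally_AP_irreducible :: "sign_matrix \<Rightarrow> nat \<Rightarrow> bool" where
  "minimally_AP_irreducible A n \<longleftrightarrow>
     AP_irreducible A n \<and>
     (\<forall>i<n. \<forall>j<n. A i j \<noteq> Zero \<longrightarrow> \<not> AP_irreducible (zero_entry A i j) n)"

definition irr_component :: "sign_matrix \<Rightarrow> nat \<Rightarrow> nat set \<Rightarrow> bool" where
  "irr_component M n \<alpha> \<longleftrightarrow>
     \<alpha> \<noteq> {} \<and> \<alpha> \<subseteq> {0..<n} \<and> irreducible_on M \<alpha> \<and>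
     (\<forall>\<beta>. \<alpha> \<subset> \<beta> \<and> \<beta> \<subseteq> {0..<n} \<longrightarrow> \<not> irreducible_on M \<beta>)"

definition nnz :: "sign_matrix \<Rightarrow> nat \<Rightarrow> nat" where
  "nnz A n = card {(i, j). i < n \<and> j < n \<and> A i j \<noteq> Zero}"

definition row_nnz :: "sign_matrix \<Rightarrow> nat \<Rightarrow> nat \<Rightarrow> nat" where
  "row_nnz A n i = card {j. j < n \<and> A i j \<noteq> Zero}"

definition col_nnz :: "sign_matrix \<Rightarrow> nat \<Rightarrow> nat \<Rightarrow> nat" where
  "col_nnz A n j = card {i. i < n \<and> A i j \<noteq> Zero}"

end

theory Submission imports Defs begin

lemma card_conv: "card (r\<inverse>) = card (r :: ('a \<times> 'b) set)"
proof -
  have e: "r\<inverse> = prod.swap ` r" by auto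
  have i: "inj_on prod.swap r" by (rule inj_onI) auto
  show ?thesis unfolding e by (rule card_image[OF i])
qed

lemma exit_arc:
  assumes "(s,v) \<in> X\<^sup>*" "s \<in> R" "v \<notin> R"
  shows "\<exists>u w. (u,w) \<in> X \<and> u \<in> R \<and> w \<notin> R"
  using assms(1,3)
proof (induction rule: rtrancl_induct)
  case base then show ?case using assms(2) by simp
next
  case (step y z)
  then show ?case by (cases "y \<in> R") auto
qed

lemma grow:
  fixes V :: "'a set" and c :: "'a \<Rightarrow> 'b"
  assumes fin: "finite V" and GV: "G \<subseteq> V\<times>V" and FV: "F \<subseteq> V\<times>V" and SV: "S \<subseteq> V"
  and cl: "\<forall>x\<in>V. \<forall>y\<in>V. c x = c y \<longrightarrow> (x,y) \<in> F\<^sup>*"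
  and reach: "\<forall>v\<in>V. \<exists>s\<in>S. (s,v) \<in> (F \<union> G)\<^sup>*"
  shows "\<exists>T\<subseteq>G. card T + card (c ` S) \<le> card (c ` V) \<and> (\<forall>v\<in>V. \<exists>s\<in>S. (s,v)\<in>(F \<union> T)\<^sup>*)"
proof -
  define R where "R = (\<lambda>T. {v\<in>V. \<exists>s\<in>S. (s,v)\<in>(F\<union>T)\<^sup>*})"
  have finG: "finite G" by (rule finite_subset[OF GV]) (simp add: fin)
  have main: "\<forall>T. card (V - R T) = m \<longrightarrow> T \<subseteq> G \<longrightarrow> card T + card (c ` S) \<le> card (c ` R T)
     \<longrightarrow> (\<exists>T'\<subseteq>G. card T' + card (c ` S) \<le> card (c ` V) \<and> (\<forall>v\<in>V. \<exists>s\<in>S. (s,v)\<in>(F \<union> T')\<^sup>*))" for m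
  proof (induction m rule: less_induct)
    case (less m)
    show ?case
    proof (intro allI impI)
      fix T assume m: "card (V - R T) = m" and TG: "T \<subseteq> G" and cT: "card T + card (c ` S) \<le> card (c ` R T)"
      show "\<exists>T'\<subseteq>G. card T' + card (c ` S) \<le> card (c ` V) \<and> (\<forall>v\<in>V. \<exists>s\<in>S. (s,v)\<in>(F \<union> T')\<^sup>*)"
      proof (cases "R T = V")
        case True
        have all: "\<forall>v\<in>V. \<exists>s\<in>S. (s,v)\<in>(F \<union> T)\<^sup>*"
        proof
          fix v assume "v \<in> V"
          then have "v \<in> R T" using True by simp
          then show "\<exists>s\<in>S. (s,v)\<in>(F \<union> T)\<^sup>*" unfolding R_def by simp
        qed
        show ?thesis using TG cT True all by auto
      next
        case False
        have RV: "R T \<subseteq> V" unfolding R_def by auto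
        with False obtain v where v: "v \<in> V" "v \<notin> R T" by blast
        from reach v obtain s where s: "s \<in> S" "(s,v) \<in> (F \<union> G)\<^sup>*" by blast
        have sR: "s \<in> R T" using s SV unfolding R_def by auto
        from exit_arc[OF s(2) sR v(2)] obtain u w where uw: "(u,w) \<in> F \<union> G" "u \<in> R T" "w \<notin> R T" by blast
        from uw(2) obtain s' where s': "s' \<in> S" "(s',u) \<in> (F\<union>T)\<^sup>*" unfolding R_def by blast
        have wV: "w \<in> V" using uw(1) GV FV by auto
        have notF: "(u,w) \<notin> F \<union> T"
        proof
          assume "(u,w) \<in> F \<union> T"
          then have "(s',w) \<in> (F\<union>T)\<^sup>*" using s'(2) by (meson rtrancl.rtrancl_into_rtrancl)
          then show False using uw(3) wV s'(1) unfolding R_def by auto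
        qed
        then have uwG: "(u,w) \<in> G" using uw(1) by auto
        define T' where "T' = insert (u,w) T"
        have T'G: "T' \<subseteq> G" using TG uwG T'_def by auto
        have RR: "insert w (R T) \<subseteq> R T'"
        proof
          fix x assume "x \<in> insert w (R T)"
          then show "x \<in> R T'"
          proof
            assume "x = w"
            have "(s',u) \<in> (F\<union>T')\<^sup>*" using s'(2) rtrancl_mono[of "F\<union>T" "F\<union>T'"] T'_def by auto
            moreover have "(u,w) \<in> F \<union> T'" using T'_def by auto
            ultimately have "(s',w) \<in> (F\<union>T')\<^sup>*" by (meson rtrancl.rtrancl_into_rtrancl)
            then show ?thesis using \<open>x = w\<close> wV s'(1) unfolding R_def by auto
          next
            assume "x \<in> R T"
            then show ?thesis using rtrancl_mono[of "F\<union>T" "F\<union>T'"] T'_def unfolding R_def by blast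
          qed
        qed
        have RT'V: "R T' \<subseteq> V" unfolding R_def by auto
        have cw: "c w \<notin> c ` R T"
        proof
          assume "c w \<in> c ` R T"
          then obtain y where y: "y \<in> R T" "c w = c y" by auto
          have "y \<in> V" using y(1) RV by auto
          then have "(y,w) \<in> F\<^sup>*" using cl wV y(2) by auto
          then have "(y,w) \<in> (F\<union>T)\<^sup>*" using rtrancl_mono[of F "F\<union>T"] by auto
          with y(1) have "w \<in> R T" unfolding R_def using wV by (auto intro: rtrancl_trans)
          then show False using uw(3) by simp
        qed
        have finR: "finite (R T)" using finite_subset[OF RV fin] .
        have finT: "finite T" using finite_subset[OF TG finG] .
        have "card (c ` R T') \<ge> card (c ` insert w (R T))"
          using RR RT'V fin by (intro card_mono finite_imageI image_mono) (auto intro: finite_subset)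
        also have "card (c ` insert w (R T)) = Suc (card (c ` R T))" using cw finR by simp
        finally have c1: "Suc (card (c ` R T)) \<le> card (c ` R T')" .
        have c2: "card T' = Suc (card T)" using T'_def finT notF by simp
        have lt: "card (V - R T') < m"
        proof -
          have "V - R T' \<subset> V - R T" using RR wV uw(3) by auto
          then show ?thesis using m fin by (metis finite_Diff psubset_card_mono)
        qed
        have "card T' + card (c ` S) \<le> card (c ` R T')" using c1 c2 cT by simp
        then show ?thesis using less.IH[OF lt] T'G by blast
      qed
    qed
  qed
  have "S \<subseteq> R {}" using SV unfolding R_def by auto
  moreover have "finite (R {})" using fin unfolding R_def by auto
  ultimately have "card (c ` S) \<le> card (c ` R {})" by (simp add: card_mono image_mono)
  then show ?thesis using main[of "card (V - R {})"] by auto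
qed

lemma arcs_pos: "arcs_on (pos_part A) S = {(a,b). a\<in>S \<and> b\<in>S \<and> A a b = Pos}"
  by (auto simp: arcs_on_def pos_part_def)

lemma comp_irr:
  fixes A :: sign_matrix and n i :: nat
  assumes "i < n"
  defines "P \<equiv> {(i,j). i<n \<and> j<n \<and> A i j = Pos}"
  shows "irr_component (pos_part A) n {x. x<n \<and> (i,x)\<in>P\<^sup>* \<and> (x,i)\<in>P\<^sup>*}"
proof -
  define C where "C = {x. x<n \<and> (i,x)\<in>P\<^sup>* \<and> (x,i)\<in>P\<^sup>*}"
  define Pc where "Pc = arcs_on (pos_part A) C"
  have Pc: "Pc = {(a,b). a\<in>C \<and> b\<in>C \<and> A a b = Pos}" unfolding Pc_def arcs_pos ..
  have key: "(a,x) \<in> P\<^sup>* \<Longrightarrow> (x,b)\<in>P\<^sup>* \<Longrightarrow> a\<in>C \<Longrightarrow> b\<in>C \<Longrightarrow> (a,x) \<in> Pc\<^sup>*" for a x b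
  proof (induction rule: rtrancl_induct)
    case base then show ?case by simp
  next
    case (step y z)
    have yz: "(y,z) \<in> P" by fact
    have zb: "(z,b) \<in> P\<^sup>*" by fact
    have yb: "(y,b) \<in> P\<^sup>*" using yz zb by (meson converse_rtrancl_into_rtrancl)
    have ay: "(a,y) \<in> P\<^sup>*" by fact
    have ia: "(i,a) \<in> P\<^sup>*" "(b,i) \<in> P\<^sup>*" using step.prems unfolding C_def by auto
    have iy: "(i,y) \<in> P\<^sup>*" using ia(1) ay by (rule rtrancl_trans)
    have yi: "(y,i) \<in> P\<^sup>*" using yb ia(2) by (rule rtrancl_trans)
    have iz: "(i,z) \<in> P\<^sup>*" using iy yz by (rule rtrancl_into_rtrancl)
    have zi: "(z,i) \<in> P\<^sup>*" using zb ia(2) by (rule rtrancl_trans)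
    have yzn: "y < n" "z < n" using yz unfolding P_def by auto
    have "y \<in> C" using iy yi yzn unfolding C_def by simp
    moreover have "z \<in> C" using iz zi yzn unfolding C_def by simp
    ultimately have "(y,z) \<in> Pc" using yz unfolding Pc P_def by auto
    then show ?case using step.IH[OF yb step.prems(2) step.prems(3)] by (meson rtrancl.rtrancl_into_rtrancl)
  qed
  have irr: "irreducible_on (pos_part A) C"
    unfolding irreducible_on_def Pc_def[symmetric]
  proof (intro disjI2 ballI)
    fix a b assume "a \<in> C" "b \<in> C"
    then have "(a,b) \<in> P\<^sup>*" unfolding C_def by (auto intro: rtrancl_trans)
    then show "(a,b) \<in> Pc\<^sup>*" using key[of a b b] \<open>a \<in> C\<close> \<open>b \<in> C\<close> by simp
  qed
  have max: "\<not> irreducible_on (pos_part A) \<beta>" if hb: "C \<subset> \<beta>" "\<beta> \<subseteq> {0..<n}" for \<beta>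
  proof
    assume ir: "irreducible_on (pos_part A) \<beta>"
    obtain y where y: "y \<in> \<beta>" "y \<notin> C" using hb by auto
    have iC: "i \<in> C" unfolding C_def using assms by auto
    then have iB: "i \<in> \<beta>" using hb by auto
    have "i \<noteq> y" using iC y by auto
    have fin: "finite \<beta>" using finite_subset[OF hb(2)] by simp
    have "card {i,y} \<le> card \<beta>" using iB y fin by (intro card_mono) auto
    then have "card \<beta> \<noteq> 1" using \<open>i \<noteq> y\<close> by auto
    then have all: "\<forall>a\<in>\<beta>. \<forall>b\<in>\<beta>. (a,b) \<in> (arcs_on (pos_part A) \<beta>)\<^sup>*" using ir unfolding irreducible_on_def by auto
    have sub: "arcs_on (pos_part A) \<beta> \<subseteq> P" unfolding arcs_pos P_def using hb(2) by auto
    have "(i,y) \<in> P\<^sup>*" "(y,i) \<in> P\<^sup>*" using all iB y(1) rtrancl_mono[OF sub] by auto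
    moreover have "y < n" using y hb(2) by auto
    ultimately show False using y(2) unfolding C_def by auto
  qed
  have "C \<noteq> {}" "C \<subseteq> {0..<n}" unfolding C_def using assms by auto
  then have "irr_component (pos_part A) n C" using irr max unfolding irr_component_def by auto
  then show ?thesis unfolding C_def .
qed

definition subm :: "sign_matrix \<Rightarrow> sign_matrix \<Rightarrow> bool" where
  "subm X Y \<longleftrightarrow> (\<forall>a b. X a b = Zero \<or> X a b = Y a b)"

lemma irr_mono:
  assumes "irreducible_on X S" "arcs_on X S \<subseteq> arcs_on Y S"
  shows "irreducible_on Y S"
  using assms rtrancl_mono[OF assms(2)] unfolding irreducible_on_def by blast

lemma s1: "subm X Y \<Longrightarrow> arcs_on X S \<subseteq> arcs_on Y S"
    unfolding subm_def arcs_on_def by (smt (verit) case_prodE case_prodI mem_Collect_eq subsetI)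
lemma s2: "subm X Y \<Longrightarrow> arcs_on (B_mat X) S \<subseteq> arcs_on (B_mat Y) S"
  unfolding subm_def arcs_on_def B_mat_def pos_part_def neg_part_def
  apply (rule subsetI) apply (clarsimp split: if_splits)
  by (metis sign.distinct)

lemma AP_mono:
  assumes "AP_irreducible X n" "subm X Y"
  shows "AP_irreducible Y n"
proof -
  have s1: "arcs_on X S \<subseteq> arcs_on Y S" for S using s1 assms(2) .
  have s2: "arcs_on (B_mat X) S \<subseteq> arcs_on (B_mat Y) S" for S using s2 assms(2) .
  have p: "X a b = Pos \<Longrightarrow> Y a b = Pos" for a b using assms(2) unfolding subm_def
    by (metis sign.distinct(3))
  show ?thesis using assms(1) irr_mono[OF _ s1] irr_mono[OF _ s2] p
    unfolding AP_irreducible_def irreducible_def by blast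
qed

lemma sign_nz: "x \<noteq> Zero \<longleftrightarrow> x = Pos \<or> x = Neg"
  by (cases x) auto

lemma bound:
  fixes A :: sign_matrix and n :: nat
  assumes n1: "n \<ge> 1"
    and min: "minimally_AP_irreducible A n"
    and diag: "\<forall>i<n. A i i = Zero"
    and hyp: "\<forall>\<alpha> \<beta>. irr_component (pos_part A) n \<alpha> \<and> irr_component (pos_part A) n \<beta> \<and> \<alpha> \<noteq> \<beta>
           \<longrightarrow> (\<forall>i\<in>\<alpha>. \<forall>j\<in>\<beta>. A i j \<noteq> Pos)"
  shows "nnz A n \<le> 2 * n - 2"
proof -
  define V where "V = {0..<n}"
  define P where "P = {(i,j). i<n \<and> j<n \<and> A i j = Pos}"
  define N where "N = {(i,j). i<n \<and> j<n \<and> A i j = Neg}"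
  have AP: "AP_irreducible A n" using min unfolding minimally_AP_irreducible_def by simp
  have rowP: "\<forall>i<n. \<exists>j<n. A i j = Pos" using AP unfolding AP_irreducible_def by simp
  have n2: "n \<noteq> 1"
  proof
    assume "n = 1"
    then obtain j where "j < 1" "A 0 j = Pos" using rowP by auto
    then show False using diag \<open>n=1\<close> by auto
  qed
  have finV: "finite V" unfolding V_def by simp
  have cardV: "card V = n" unfolding V_def by simp
  have PV: "P \<subseteq> V\<times>V" and NV: "N \<subseteq> V\<times>V" unfolding P_def N_def V_def by auto
  have arcsA: "arcs_on A V = P \<union> N" unfolding arcs_on_def P_def N_def V_def
    by (auto simp: sign_nz)
  have strong: "\<forall>i\<in>V. \<forall>j\<in>V. (i,j) \<in> (P\<union>N)\<^sup>*"
    using AP n2 arcsA cardV unfolding AP_irreducible_def irreducible_def irreducible_on_def V_def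
    by auto
  have Pback: "(j,i)\<in>P\<^sup>*" if ij: "(i,j)\<in>P" for i j
  proof (rule ccontr)
    assume nj: "(j,i) \<notin> P\<^sup>*"
    define Ci where "Ci = {x. x<n \<and> (i,x)\<in>P\<^sup>* \<and> (x,i)\<in>P\<^sup>*}"
    define Cj where "Cj = {x. x<n \<and> (j,x)\<in>P\<^sup>* \<and> (x,j)\<in>P\<^sup>*}"
    have ijn: "i < n" "j < n" using ij unfolding P_def by auto
    have c1: "irr_component (pos_part A) n Ci" using comp_irr[of i n A] ijn unfolding Ci_def P_def by simp
    have c2: "irr_component (pos_part A) n Cj" using comp_irr[of j n A] ijn unfolding Cj_def P_def by simp
    have "j \<in> Cj" "j \<notin> Ci" "i \<in> Ci" unfolding Ci_def Cj_def using ijn nj by auto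
    then have "Ci \<noteq> Cj" by auto
    then have "A i j \<noteq> Pos" using hyp[rule_format, of Ci Cj] c1 c2 \<open>i \<in> Ci\<close> \<open>j \<in> Cj\<close> by simp
    with ij show False unfolding P_def by simp
  qed
  have Psym: "(b,a)\<in>P\<^sup>*" if "(a,b)\<in>P\<^sup>*" for a b
    using that
  proof (induction rule: rtrancl_induct)
    case base then show ?case by simp
  next
    case (step y z)
    have "(z,y) \<in> P\<^sup>*" using Pback[OF step.hyps(2)] .
    then show ?case using step.IH by (rule rtrancl_trans)
  qed
  define c where "c x = Min {y. y<n \<and> (x,y)\<in>P\<^sup>*}" for x
  have c1: "c x < n \<and> (x, c x)\<in>P\<^sup>*" if "x<n" for x
  proof -
    have fin: "finite {y. y<n \<and> (x,y)\<in>P\<^sup>*}" by simp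
    have "x \<in> {y. y<n \<and> (x,y)\<in>P\<^sup>*}" using that by simp
    then have "c x \<in> {y. y<n \<and> (x,y)\<in>P\<^sup>*}" unfolding c_def using fin by (intro Min_in) auto
    then show ?thesis by simp
  qed
  have c2: "c x = c y" if "(x,y)\<in>P\<^sup>*" for x y
  proof -
    have "{z. z<n \<and> (x,z)\<in>P\<^sup>*} = {z. z<n \<and> (y,z)\<in>P\<^sup>*}"
      using that Psym[OF that] by (auto intro: rtrancl_trans)
    then show ?thesis unfolding c_def by simp
  qed
  have c3: "c (c x) = c x" if "x<n" for x using c2[of x "c x"] c1[OF that] by simp
  define Rt where "Rt = c ` V"
  have RtV: "Rt \<subseteq> V" unfolding Rt_def V_def using c1 by auto
  have cRt: "c s = s" if "s \<in> Rt" for s using that c3 unfolding Rt_def V_def by auto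
  have cback: "(c v, v) \<in> P\<^sup>*" if "v \<in> V" for v using c1 Psym that unfolding V_def by auto
  have cfwd: "(v, c v) \<in> P\<^sup>*" if "v \<in> V" for v using c1 that unfolding V_def by auto
  have cV: "c v \<in> V" if "v \<in> V" for v using c1 that unfolding V_def by auto
  have g1: "\<forall>x\<in>V. \<forall>y\<in>V. id x = id y \<longrightarrow> (x,y) \<in> {}\<^sup>*" by simp
  have g2: "\<forall>v\<in>V. \<exists>s\<in>Rt. (s,v) \<in> ({} \<union> P)\<^sup>*" using cback unfolding Rt_def by auto
  obtain T1 where T1: "T1 \<subseteq> P" "card T1 + card (id ` Rt) \<le> card (id ` V)"
      "\<forall>v\<in>V. \<exists>s\<in>Rt. (s,v) \<in> ({} \<union> T1)\<^sup>*"
    using grow[OF finV PV _ RtV g1 g2] by blast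
  have T1c: "card T1 + card Rt \<le> n" using T1(2) cardV by simp
  have PcV: "P\<inverse> \<subseteq> V\<times>V" using PV by auto
  have g3: "\<forall>v\<in>V. \<exists>s\<in>Rt. (s,v) \<in> ({} \<union> P\<inverse>)\<^sup>*" using cfwd unfolding Rt_def
    by (auto simp: rtrancl_converse)
  obtain T2' where T2': "T2' \<subseteq> P\<inverse>" "card T2' + card (id ` Rt) \<le> card (id ` V)"
      "\<forall>v\<in>V. \<exists>s\<in>Rt. (s,v) \<in> ({} \<union> T2')\<^sup>*"
    using grow[OF finV PcV _ RtV g1 g3] by blast
  define T2 where "T2 = T2'\<inverse>"
  have T2: "T2 \<subseteq> P" using T2'(1) unfolding T2_def by auto
  have T2c: "card T2 + card Rt \<le> n" using T2'(2) cardV card_conv[of T2'] unfolding T2_def by simp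
  have T2r: "\<forall>v\<in>V. \<exists>s\<in>Rt. (v,s) \<in> T2\<^sup>*"
  proof
    fix v assume "v \<in> V"
    then obtain s where "s \<in> Rt" "(s,v) \<in> T2'\<^sup>*" using T2'(3) by auto
    moreover have "T2' = T2\<inverse>" unfolding T2_def by simp
    ultimately show "\<exists>s\<in>Rt. (v,s) \<in> T2\<^sup>*" by (auto simp: rtrancl_converse)
  qed
  have out1: "(c v, v) \<in> T1\<^sup>*" if vV: "v \<in> V" for v
  proof -
    obtain s where s: "s \<in> Rt" "(s,v) \<in> T1\<^sup>*" using T1(3) vV by auto
    have "(s,v) \<in> P\<^sup>*" using rtrancl_mono[OF T1(1)] s(2) by auto
    then have "s = c v" using c2[of s v] cRt[OF s(1)] by simp
    then show ?thesis using s by simp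
  qed
  have in2: "(v, c v) \<in> T2\<^sup>*" if vV: "v \<in> V" for v
  proof -
    obtain s where s: "s \<in> Rt" "(v,s) \<in> T2\<^sup>*" using T2r vV by auto
    have "(v,s) \<in> P\<^sup>*" using rtrancl_mono[OF T2] s(2) by auto
    then have "s = c v" using c2[of v s] cRt[OF s(1)] by simp
    then show ?thesis using s by simp
  qed
  define F where "F = T1 \<union> T2"
  have FP: "F \<subseteq> P" using T1(1) T2 unfolding F_def by auto
  have FV: "F \<subseteq> V\<times>V" using FP PV by auto
  have clF: "\<forall>x\<in>V. \<forall>y\<in>V. c x = c y \<longrightarrow> (x,y)\<in>F\<^sup>*"
  proof (intro ballI impI)
    fix x y assume xy: "x \<in> V" "y \<in> V" "c x = c y"
    have "(x, c x) \<in> F\<^sup>*" using in2[OF xy(1)] rtrancl_mono[of T2 F] unfolding F_def by auto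
    moreover have "(c y, y) \<in> F\<^sup>*" using out1[OF xy(2)] rtrancl_mono[of T1 F] unfolding F_def by auto
    ultimately show "(x,y) \<in> F\<^sup>*" using xy(3) rtrancl_trans[of x "c x" F y] by simp
  qed
  have PF: "P \<subseteq> F\<^sup>*"
  proof
    fix e assume e: "e \<in> P"
    obtain a b where ab: "e = (a,b)" by force
    have "a \<in> V" "b \<in> V" using e ab PV by auto
    moreover have "c a = c b" using c2 e ab by auto
    ultimately show "e \<in> F\<^sup>*" using clF ab by auto
  qed
  have PNF: "(P \<union> N)\<^sup>* \<subseteq> (F \<union> N)\<^sup>*"
  proof (rule rtrancl_subset_rtrancl)
    show "P \<union> N \<subseteq> (F \<union> N)\<^sup>*" using PF rtrancl_mono[of F "F \<union> N"] by auto
  qed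
  have zV: "0 \<in> V" using n1 unfolding V_def by auto
  have reach3: "\<forall>v\<in>V. \<exists>s\<in>{0}. (s,v) \<in> (F \<union> N)\<^sup>*" using strong zV PNF by auto
  obtain T3 where T3: "T3 \<subseteq> N" "card T3 + card (c ` {0}) \<le> card (c ` V)"
      "\<forall>v\<in>V. \<exists>s\<in>{0}. (s,v) \<in> (F \<union> T3)\<^sup>*"
    using grow[OF finV NV FV _ clF reach3] zV by blast
  have T3c: "card T3 + 1 \<le> card Rt" using T3(2) unfolding Rt_def by simp
  have NcV: "N\<inverse> \<subseteq> V\<times>V" using NV by auto
  have FcV: "F\<inverse> \<subseteq> V\<times>V" using FV by auto
  have clF': "\<forall>x\<in>V. \<forall>y\<in>V. c x = c y \<longrightarrow> (x,y)\<in>(F\<inverse>)\<^sup>*"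
    using clF by (auto simp: rtrancl_converse)
  have reach4: "\<forall>v\<in>V. \<exists>s\<in>{0}. (s,v) \<in> (F\<inverse> \<union> N\<inverse>)\<^sup>*"
  proof
    fix v assume "v \<in> V"
    then have "(v,0) \<in> (F \<union> N)\<^sup>*" using strong zV PNF by auto
    then have "(0,v) \<in> ((F \<union> N)\<inverse>)\<^sup>*" by (simp add: rtrancl_converse)
    then show "\<exists>s\<in>{0}. (s,v) \<in> (F\<inverse> \<union> N\<inverse>)\<^sup>*" by (simp add: converse_Un)
  qed
  obtain T4' where T4': "T4' \<subseteq> N\<inverse>" "card T4' + card (c ` {0}) \<le> card (c ` V)"
      "\<forall>v\<in>V. \<exists>s\<in>{0}. (s,v) \<in> (F\<inverse> \<union> T4')\<^sup>*"
    using grow[OF finV NcV FcV _ clF' reach4] zV by blast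
  define T4 where "T4 = T4'\<inverse>"
  have T4: "T4 \<subseteq> N" using T4'(1) unfolding T4_def by auto
  have T4c: "card T4 + 1 \<le> card Rt" using T4'(2) card_conv[of T4'] unfolding Rt_def T4_def by simp
  have T4r: "(v,0) \<in> (F \<union> T4)\<^sup>*" if "v \<in> V" for v
  proof -
    have "(0,v) \<in> (F\<inverse> \<union> T4')\<^sup>*" using T4'(3) that by auto
    moreover have "F\<inverse> \<union> T4' = (F \<union> T4)\<inverse>" unfolding T4_def by auto
    ultimately show ?thesis by (simp add: rtrancl_converse)
  qed
  have T3r: "(0,v) \<in> (F \<union> T3)\<^sup>*" if "v \<in> V" for v using T3(3) that by auto
  define H where "H = F \<union> T3 \<union> T4"
  have HPN: "H \<subseteq> P \<union> N" unfolding H_def using FP T3(1) T4 by auto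
  have cardH: "card H \<le> 2 * n - 2"
  proof -
    have a1: "card F \<le> card T1 + card T2" unfolding F_def by (rule card_Un_le)
    have a2: "card (F \<union> T3) \<le> card F + card T3" by (rule card_Un_le)
    have a3: "card H \<le> card (F \<union> T3) + card T4" unfolding H_def by (rule card_Un_le)
    have "card H \<le> card T1 + card T2 + card T3 + card T4" using a1 a2 a3 by linarith
    then show ?thesis using T1c T2c T3c T4c by linarith
  qed
  have HV: "H \<subseteq> V \<times> V" using HPN PV NV by auto
  have finH: "finite H" using finite_subset[OF HV] finV by simp
  define A' where "A' = (\<lambda>a b. if (a,b) \<in> H then A a b else Zero)"
  have HA: "A a b \<noteq> Zero" if "(a,b) \<in> H" for a b using HPN that unfolding P_def N_def by auto
  have arcsA': "arcs_on A' V = H"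
  proof
    show "arcs_on A' V \<subseteq> H" unfolding arcs_on_def A'_def by (auto split: if_splits)
    show "H \<subseteq> arcs_on A' V"
    proof
      fix e assume e: "e \<in> H"
      obtain a b where ab: "e = (a,b)" by force
      show "e \<in> arcs_on A' V" using e ab HV HA[of a b] unfolding arcs_on_def A'_def by auto
    qed
  qed
  have FH: "F \<subseteq> H" unfolding H_def by auto
  have irrH: "(x,y) \<in> H\<^sup>*" if "x \<in> V" "y \<in> V" for x y
  proof -
    have "(x,0) \<in> H\<^sup>*" using T4r[OF that(1)] rtrancl_mono[of "F \<union> T4" H] unfolding H_def by auto
    moreover have "(0,y) \<in> H\<^sup>*" using T3r[OF that(2)] rtrancl_mono[of "F \<union> T3" H] unfolding H_def by auto
    ultimately show ?thesis by (rule rtrancl_trans)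
  qed
  have Fio: "(\<exists>y. (x,y) \<in> F) \<and> (\<exists>y. (y,x) \<in> F)" if xV: "x \<in> V" for x
  proof -
    obtain j where j: "j < n" "A x j = Pos" using rowP xV unfolding V_def by auto
    have xj: "(x,j) \<in> P" using j xV unfolding P_def V_def by auto
    have jx: "j \<noteq> x" using j diag xV unfolding V_def by auto
    have jV: "j \<in> V" using j unfolding V_def by auto
    have cj: "c j = c x" using c2[of x j] xj by (simp add: r_into_rtrancl)
    show ?thesis
    proof (cases "x = c x")
      case True
      have "(x, j) \<in> T1\<^sup>*" using out1[OF jV] cj True by simp
      then obtain z where "(x,z) \<in> T1" using jx by (auto elim: converse_rtranclE)
      moreover have "(j, x) \<in> T2\<^sup>*" using in2[OF jV] cj True by simp
      then obtain z' where "(z',x) \<in> T2" using jx by (auto elim: rtranclE)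
      ultimately show ?thesis unfolding F_def by auto
    next
      case False
      have "(c x, x) \<in> T1\<^sup>*" using out1[OF xV] .
      then obtain z where "(z,x) \<in> T1" using False by (auto elim: rtranclE)
      moreover have "(x, c x) \<in> T2\<^sup>*" using in2[OF xV] .
      then obtain z' where "(x,z') \<in> T2" using False by (auto elim: converse_rtranclE)
      ultimately show ?thesis unfolding F_def by auto
    qed
  qed
  have FA': "A' a b = Pos" if "(a,b) \<in> F" for a b using that FH FP unfolding A'_def P_def by auto
  have rows: "\<forall>i<n. \<exists>j<n. A' i j = Pos"
  proof (intro allI impI)
    fix i assume "i < n"
    then obtain y where y: "(i,y) \<in> F" using Fio unfolding V_def by auto
    then have "y < n" using FV unfolding V_def by auto
    then show "\<exists>j<n. A' i j = Pos" using FA'[OF y] by blast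
  qed
  have cols: "\<forall>j<n. \<exists>i<n. A' i j = Pos"
  proof (intro allI impI)
    fix j assume "j < n"
    then obtain y where y: "(y,j) \<in> F" using Fio unfolding V_def by auto
    then have "y < n" using FV unfolding V_def by auto
    then show "\<exists>i<n. A' i j = Pos" using FA'[OF y] by blast
  qed
  define BH where "BH = F \<union> (T3 \<union> T4)\<inverse>"
  have BHsub: "BH \<subseteq> arcs_on (B_mat A') V"
  proof
    fix e assume e: "e \<in> BH"
    obtain a b where ab: "e = (a,b)" by force
    show "e \<in> arcs_on (B_mat A') V"
    proof (cases "(a,b) \<in> F")
      case True
      then show ?thesis using ab FA'[OF True] FV unfolding arcs_on_def B_mat_def pos_part_def by auto
    next
      case False
      then have ba: "(b,a) \<in> T3 \<union> T4" using e ab unfolding BH_def by auto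
      then have "(b,a) \<in> H" unfolding H_def by auto
      moreover have "(b,a) \<in> N" using ba T3(1) T4 by auto
      ultimately have "A' b a = Neg" unfolding A'_def N_def by auto
      then show ?thesis using ab ba T3(1) T4 NV unfolding arcs_on_def B_mat_def neg_part_def by auto
    qed
  qed
  have rev: "(b,a) \<in> BH\<^sup>*" if "(a,b) \<in> H\<^sup>*" for a b
    using that
  proof (induction rule: rtrancl_induct)
    case base then show ?case by simp
  next
    case (step y z)
    have "(z,y) \<in> BH\<^sup>*"
    proof (cases "(y,z) \<in> F")
      case True
      then have "y \<in> V" "z \<in> V" "c y = c z" using FV FP c2[of y z] by (auto intro: r_into_rtrancl)
      then have "(z,y) \<in> F\<^sup>*" using clF by auto
      then show ?thesis using rtrancl_mono[of F BH] unfolding BH_def by auto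
    next
      case False
      then have "(z,y) \<in> BH" using step.hyps(2) unfolding BH_def H_def by auto
      then show ?thesis by simp
    qed
    then show ?case using step.IH by (rule rtrancl_trans)
  qed
  have APA': "AP_irreducible A' n"
    unfolding AP_irreducible_def irreducible_def irreducible_on_def
  proof (intro conjI disjI2 ballI)
    fix x y assume "x \<in> {0..<n}" "y \<in> {0..<n}"
    then have xy: "x \<in> V" "y \<in> V" unfolding V_def by auto
    show "(x,y) \<in> (arcs_on A' {0..<n})\<^sup>*" using irrH[OF xy] arcsA' unfolding V_def by simp
    have "(x,y) \<in> BH\<^sup>*" using rev[OF irrH[OF xy(2) xy(1)]] .
    then show "(x,y) \<in> (arcs_on (B_mat A') {0..<n})\<^sup>*" using rtrancl_mono[OF BHsub] unfolding V_def by auto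
  next
    show "\<forall>i<n. \<exists>j<n. A' i j = Pos" by (rule rows)
    show "\<forall>j<n. \<exists>i<n. A' i j = Pos" by (rule cols)
  qed
  have ZH: "{(i, j). i < n \<and> j < n \<and> A i j \<noteq> Zero} \<subseteq> H"
  proof
    fix e assume e: "e \<in> {(i, j). i < n \<and> j < n \<and> A i j \<noteq> Zero}"
    obtain i j where ij: "e = (i,j)" by force
    show "e \<in> H"
    proof (rule ccontr)
      assume nH: "e \<notin> H"
      have "subm A' (zero_entry A i j)"
        unfolding subm_def A'_def zero_entry_def using nH ij by auto
      then have "AP_irreducible (zero_entry A i j) n" using AP_mono[OF APA'] by simp
      moreover have "\<not> AP_irreducible (zero_entry A i j) n" using min e ij
        unfolding minimally_AP_irreducible_def by auto
      ultimately show False by simp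
    qed
  qed
  have "nnz A n \<le> card H" unfolding nnz_def using card_mono[OF finH ZH] .
  then show ?thesis using cardH by simp
qed

lemma count2:
  fixes f :: "nat \<Rightarrow> nat"
  assumes "\<forall>i<n. f i \<ge> 1" "(\<Sum>i<n. f i) \<le> 2*n-2" "n \<ge> 1"
  shows "card {i. i<n \<and> f i = 1} \<ge> 2"
proof -
  have e: "(\<Sum>i<n. (if f i = 1 then 1 else 0::nat)) = card {i. i<n \<and> f i = 1}"
  proof -
    have "(\<Sum>i\<in>{i\<in>{..<n}. f i = 1}. 1::nat) = (\<Sum>i<n. (if f i = 1 then 1 else 0::nat))"
      by (rule sum.inter_filter) simp
    moreover have "{i\<in>{..<n}. f i = 1} = {i. i<n \<and> f i = 1}" by auto
    ultimately show ?thesis using card_eq_sum[of "{i. i<n \<and> f i = 1}"] by simp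
  qed
  have "(\<Sum>i<n. (2::nat)) \<le> (\<Sum>i<n. f i + (if f i = 1 then 1 else 0))"
    using assms(1) by (intro sum_mono) auto
  also have "\<dots> = (\<Sum>i<n. f i) + card {i. i<n \<and> f i = 1}" by (simp only: sum.distrib e)
  finally show ?thesis using assms(2,3) by simp
qed

theorem lemma3p11:
  fixes A :: sign_matrix and n :: nat
  assumes "n \<ge> 1"
    and "minimally_AP_irreducible A n"
    and "\<forall>i<n. A i i = Zero"
    and "\<forall>\<alpha> \<beta>. irr_component (pos_part A) n \<alpha> \<and> irr_component (pos_part A) n \<beta> \<and> \<alpha> \<noteq> \<beta>
           \<longrightarrow> (\<forall>i\<in>\<alpha>. \<forall>j\<in>\<beta>. A i j \<noteq> Pos)"
  shows "nnz A n \<le> 2 * n - 2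
         \<and> card {i. i < n \<and> row_nnz A n i = 1} \<ge> 2
         \<and> card {j. j < n \<and> col_nnz A n j = 1} \<ge> 2"
proof -
  have b: "nnz A n \<le> 2 * n - 2" using bound[OF assms] .
  have AP: "AP_irreducible A n" using assms(2) unfolding minimally_AP_irreducible_def by simp
  define Z where "Z = {(i, j). i < n \<and> j < n \<and> A i j \<noteq> Zero}"
  have Zr: "Z = (SIGMA i:{..<n}. {j. j < n \<and> A i j \<noteq> Zero})" unfolding Z_def by auto
  have Zc: "Z = (SIGMA j:{..<n}. {i. i < n \<and> A i j \<noteq> Zero})\<inverse>" unfolding Z_def by auto
  have sr: "nnz A n = (\<Sum>i<n. row_nnz A n i)"
    unfolding nnz_def Z_def[symmetric] Zr row_nnz_def by (subst card_SigmaI) auto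
  have sc: "nnz A n = (\<Sum>j<n. col_nnz A n j)"
    unfolding nnz_def Z_def[symmetric] Zc card_conv col_nnz_def by (subst card_SigmaI) auto
  have r1: "\<forall>i<n. row_nnz A n i \<ge> 1"
  proof (intro allI impI)
    fix i assume "i < n"
    then obtain j where "j < n" "A i j = Pos" using AP unfolding AP_irreducible_def by auto
    then have "j \<in> {j. j < n \<and> A i j \<noteq> Zero}" by auto
    moreover have "finite {j. j < n \<and> A i j \<noteq> Zero}" by simp
    ultimately have "card {j. j < n \<and> A i j \<noteq> Zero} > 0" by (simp add: card_gt_0_iff) blast
    then show "row_nnz A n i \<ge> 1" unfolding row_nnz_def by simp
  qed
  have c1: "\<forall>j<n. col_nnz A n j \<ge> 1"
  proof (intro allI impI)
    fix j assume "j < n"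
    then obtain i where "i < n" "A i j = Pos" using AP unfolding AP_irreducible_def by auto
    then have "i \<in> {i. i < n \<and> A i j \<noteq> Zero}" by auto
    moreover have "finite {i. i < n \<and> A i j \<noteq> Zero}" by simp
    ultimately have "card {i. i < n \<and> A i j \<noteq> Zero} > 0" by (simp add: card_gt_0_iff) blast
    then show "col_nnz A n j \<ge> 1" unfolding col_nnz_def by simp
  qed
  have "card {i. i < n \<and> row_nnz A n i = 1} \<ge> 2" using count2[OF r1 _ assms(1)] b sr by (simp only:)
  moreover have "card {j. j < n \<and> col_nnz A n j = 1} \<ge> 2" using count2[OF c1 _ assms(1)] b sc by (simp only:)
  ultimately show ?thesis using b by blast
qed

end
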